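(* Let $(X_n,q_{n,n+1})_{n\in\mathbb{N}}$ be an inverse sequence of finite $T_0$ topological spaces and continuous maps. For each $n$ let $C_n$ be a core of $X_n$, $i_n:C_n\to X_n$ the inclusion, and $r_n:X_n\to C_n$ a retraction with $r_n\circ i_n=\mathrm{id}_{C_n}$ and $i_n\circ r_n$ homotopic to $\mathrm{id}_{X_n}$. Then $(X_n,q_{n,n+1})$ is isomorphic in pro-$HTop$ to the inverse sequence $(C_n, r_n\circ q_{n,n+1}\circ i_{n+1})$ (the core of $(X_n,q_{n,n+1})$).
   Context: Finite $T_0$ spaces are identified with finite posets ($x\le y$ iff $U_x\subseteq U_y$, where $U_x$ is the minimal open set containing $x$); let $F_x=\{y\mid y\ge x\}$. A point $x$ is a down (resp. up) beat point if $U_x\setminus\{x\}$ has a maximum (resp. $F_x\setminus\{x\}$ has a minimum). A core of a finite space $X$ is a subspace obtained by removing beat points one at a time until none remain. $HTop$ is the homotopy category of topological spaces and pro-$HTop$ its pro-category of inverse systems (morphisms of inverse sequences represented by an increasing index map $f:\mathbb{N}\to\mathbb{N}$ and maps $f_n:X_{f(n)}\to Y_n$ commuting up to homotopy with bonding maps, modulo the usual equivalence). *)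

theory Defs
  imports "HOL-Analysis.Analysis"
begin

text \<open>Specialization order: x \<le> y iff U_x \<subseteq> U_y, i.e. every open set containing y contains x.\<close>
definition spec_le :: "'a topology \<Rightarrow> 'a \<Rightarrow> 'a \<Rightarrow> bool" where
  "spec_le X x y \<longleftrightarrow> x \<in> topspace X \<and> y \<in> topspace X \<and>
     (\<forall>U. openin X U \<and> y \<in> U \<longrightarrow> x \<in> U)"

definition down_beat_point :: "'a topology \<Rightarrow> 'a \<Rightarrow> bool" where
  "down_beat_point X x \<longleftrightarrow> x \<in> topspace X \<and>
     (\<exists>m\<in>{y. spec_le X y x} - {x}. \<forall>y\<in>{y. spec_le X y x} - {x}. spec_le X y m)"

definition up_beat_point :: "'a topology \<Rightarrow> 'a \<Rightarrow> bool" where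
  "up_beat_point X x \<longleftrightarrow> x \<in> topspace X \<and>
     (\<exists>m\<in>{y. spec_le X x y} - {x}. \<forall>y\<in>{y. spec_le X x y} - {x}. spec_le X m y)"

definition beat_point :: "'a topology \<Rightarrow> 'a \<Rightarrow> bool" where
  "beat_point X x \<longleftrightarrow> down_beat_point X x \<or> up_beat_point X x"

definition beat_step :: "'a topology \<Rightarrow> 'a set \<Rightarrow> 'a set \<Rightarrow> bool" where
  "beat_step X A B \<longleftrightarrow> (\<exists>x. beat_point (subtopology X A) x \<and> B = A - {x})"

definition is_core :: "'a topology \<Rightarrow> 'a set \<Rightarrow> bool" where
  "is_core X C \<longleftrightarrow> (beat_step X)\<^sup>*\<^sup>* (topspace X) C \<and>
     (\<nexists>x. beat_point (subtopology X C) x)"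

text \<open>Composite bonding map X_{m+k} \<rightarrow> X_m, where q n : X_{n+1} \<rightarrow> X_n.\<close>
fun bond_k :: "(nat \<Rightarrow> 'a \<Rightarrow> 'a) \<Rightarrow> nat \<Rightarrow> nat \<Rightarrow> 'a \<Rightarrow> 'a" where
  "bond_k q m 0 = id"
| "bond_k q m (Suc k) = bond_k q m k \<circ> q (m + k)"

text \<open>q_{m,m'} : X_{m'} \<rightarrow> X_m for m \<le> m'.\<close>
definition bond :: "(nat \<Rightarrow> 'a \<Rightarrow> 'a) \<Rightarrow> nat \<Rightarrow> nat \<Rightarrow> 'a \<Rightarrow> 'a" where
  "bond q m m' = bond_k q m (m' - m)"

definition htpc :: "'a topology \<Rightarrow> 'b topology \<Rightarrow> ('a \<Rightarrow> 'b) \<Rightarrow> ('a \<Rightarrow> 'b) \<Rightarrow> bool" where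
  "htpc X Y f g \<longleftrightarrow> homotopic_with (\<lambda>_. True) X Y f g"

text \<open>A morphism of inverse sequences (X,p) \<rightarrow> (Y,q) in pro-HTop, represented by an
  increasing index map f and maps h n : X_{f n} \<rightarrow> Y_n commuting up to homotopy.\<close>
definition pro_morph ::
  "(nat \<Rightarrow> 'a topology) \<Rightarrow> (nat \<Rightarrow> 'a \<Rightarrow> 'a) \<Rightarrow> (nat \<Rightarrow> 'b topology) \<Rightarrow> (nat \<Rightarrow> 'b \<Rightarrow> 'b)
    \<Rightarrow> (nat \<Rightarrow> nat) \<Rightarrow> (nat \<Rightarrow> 'a \<Rightarrow> 'b) \<Rightarrow> bool" where
  "pro_morph X p Y q f h \<longleftrightarrow> mono f \<and>
     (\<forall>n. continuous_map (X (f n)) (Y n) (h n)) \<and>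
     (\<forall>n. htpc (X (f (Suc n))) (Y n) (h n \<circ> bond p (f n) (f (Suc n))) (q n \<circ> h (Suc n)))"

definition pro_equiv ::
  "(nat \<Rightarrow> 'a topology) \<Rightarrow> (nat \<Rightarrow> 'a \<Rightarrow> 'a) \<Rightarrow> (nat \<Rightarrow> 'b topology)
    \<Rightarrow> (nat \<Rightarrow> nat) \<Rightarrow> (nat \<Rightarrow> 'a \<Rightarrow> 'b) \<Rightarrow> (nat \<Rightarrow> nat) \<Rightarrow> (nat \<Rightarrow> 'a \<Rightarrow> 'b) \<Rightarrow> bool" where
  "pro_equiv X p Y f h g k \<longleftrightarrow>
     (\<forall>n. \<exists>m. f n \<le> m \<and> g n \<le> m \<and>
        htpc (X m) (Y n) (h n \<circ> bond p (f n) m) (k n \<circ> bond p (g n) m))"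

text \<open>Composite of (f,h):X\<rightarrow>Y and (g,k):Y\<rightarrow>X
  is (f \<circ> g, \<lambda>n. k n \<circ> h (g n)).\<close>
definition pro_iso ::
  "(nat \<Rightarrow> 'a topology) \<Rightarrow> (nat \<Rightarrow> 'a \<Rightarrow> 'a) \<Rightarrow> (nat \<Rightarrow> 'b topology) \<Rightarrow> (nat \<Rightarrow> 'b \<Rightarrow> 'b) \<Rightarrow> bool" where
  "pro_iso X p Y q \<longleftrightarrow>
    (\<exists>f h g k. pro_morph X p Y q f h \<and> pro_morph Y q X p g k \<and>
       pro_equiv X p X (f \<circ> g) (\<lambda>n. k n \<circ> h (g n)) id (\<lambda>_. id) \<and>
       pro_equiv Y q Y (g \<circ> f) (\<lambda>n. h n \<circ> k (f n)) id (\<lambda>_. id))"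

end

theory Submission
  imports Defs
begin

lemma bond_same: "bond q n n = id"
  by (simp add: bond_def)

lemma bond_suc: "bond q n (Suc n) = q n"
  by (simp add: bond_def)

theorem theorem3p5:
  fixes X :: "nat \<Rightarrow> 'a topology" and q :: "nat \<Rightarrow> 'a \<Rightarrow> 'a"
    and C :: "nat \<Rightarrow> 'a set" and r :: "nat \<Rightarrow> 'a \<Rightarrow> 'a"
  assumes fin: "\<And>n. finite (topspace (X n))"
    and T0: "\<And>n. t0_space (X n)"
    and q_cont: "\<And>n. continuous_map (X (Suc n)) (X n) (q n)"
    and core: "\<And>n. is_core (X n) (C n)"
    and r_cont: "\<And>n. continuous_map (X n) (subtopology (X n) (C n)) (r n)"
    and r_retr: "\<And>n x. x \<in> C n \<Longrightarrow> r n x = x"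
    and r_htpy: "\<And>n. homotopic_with (\<lambda>_. True) (X n) (X n) (r n) id"
  shows "pro_iso X q (\<lambda>n. subtopology (X n) (C n)) (\<lambda>n. r n \<circ> q n)"
proof -
  let ?Y = "\<lambda>n. subtopology (X n) (C n)"
  have m1: "pro_morph X q ?Y (\<lambda>n. r n \<circ> q n) id r"
    unfolding pro_morph_def
  proof (intro conjI allI)
    show "mono (id :: nat \<Rightarrow> nat)" by (simp add: mono_def)
    fix n
    show "continuous_map (X (id n)) (?Y n) (r n)" using r_cont by simp
    have c: "continuous_map (X (Suc n)) (?Y n) (r n \<circ> q n)"
      using q_cont r_cont continuous_map_compose by blast
    have "homotopic_with (\<lambda>_. True) (X (Suc n)) (?Y n) ((r n \<circ> q n) \<circ> r (Suc n)) ((r n \<circ> q n) \<circ> id)"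
      by (rule homotopic_with_compose_continuous_map_left[OF r_htpy c]) simp
    then have "homotopic_with (\<lambda>_. True) (X (Suc n)) (?Y n) (r n \<circ> q n) ((r n \<circ> q n) \<circ> r (Suc n))"
      by (simp add: homotopic_with_sym)
    then show "htpc (X (id (Suc n))) (?Y n) (r n \<circ> bond q (id n) (id (Suc n))) ((r n \<circ> q n) \<circ> r (Suc n))"
      by (simp add: htpc_def bond_suc)
  qed
  have m2: "pro_morph ?Y (\<lambda>n. r n \<circ> q n) X q id (\<lambda>_. id)"
    unfolding pro_morph_def
  proof (intro conjI allI)
    show "mono (id :: nat \<Rightarrow> nat)" by (simp add: mono_def)
    fix n
    show "continuous_map (?Y (id n)) (X n) id"
      by (simp add: continuous_map_id_subt)
    have c: "continuous_map (?Y (Suc n)) (X n) (q n)"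
      using q_cont continuous_map_from_subtopology by blast
    have "homotopic_with (\<lambda>_. True) (?Y (Suc n)) (X n) (r n \<circ> q n) (id \<circ> q n)"
      by (rule homotopic_with_compose_continuous_map_right[OF r_htpy c]) simp
    then show "htpc (?Y (id (Suc n))) (X n) (id \<circ> bond (\<lambda>n. r n \<circ> q n) (id n) (id (Suc n))) (q n \<circ> id)"
      by (simp add: htpc_def bond_suc comp_def)
  qed
  have e1: "pro_equiv X q X (id \<circ> id) (\<lambda>n. id \<circ> r (id n)) id (\<lambda>_. id)"
    unfolding pro_equiv_def
  proof
    fix n
    show "\<exists>m. (id \<circ> id) n \<le> m \<and> id n \<le> m \<and>
        htpc (X m) (X n) ((id \<circ> r (id n)) \<circ> bond q ((id \<circ> id) n) m) (id \<circ> bond q (id n) m)"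
      by (rule exI[of _ n]) (simp add: bond_same htpc_def r_htpy)
  qed
  have e2: "pro_equiv ?Y (\<lambda>n. r n \<circ> q n) ?Y (id \<circ> id) (\<lambda>n. r n \<circ> id) id (\<lambda>_. id)"
    unfolding pro_equiv_def
  proof
    fix n
    have "homotopic_with (\<lambda>_. True) (?Y n) (?Y n) (r n) id"
      by (rule homotopic_with_equal)
         (auto simp: r_retr intro: continuous_map_from_subtopology r_cont)
    then show "\<exists>m. (id \<circ> id) n \<le> m \<and> id n \<le> m \<and>
        htpc (?Y m) (?Y n) ((r n \<circ> id) \<circ> bond (\<lambda>n. r n \<circ> q n) ((id \<circ> id) n) m) (id \<circ> bond (\<lambda>n. r n \<circ> q n) (id n) m)"
      by (intro exI[of _ n]) (simp add: bond_same htpc_def)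
  qed
  show ?thesis
    unfolding pro_iso_def
    using m1 m2 e1 e2 by blast
qed

end
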